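(* Let $N\ge2$ be an integer. Consider, for $\lambda\in\mathbb{R}$, the equation $$-w''+(N-2)w'+(N-1)w=\frac{N-1}{2}e^{-t}w^2+\lambda e^{(N-3)t}\int_0^{e^{-t}}g(s)\,ds \qquad (\ast)$$ and the three problems: (D) $w\in C^2([0,\infty))$ solves $(\ast)$ for $t\ge0$ with $w(0)=0$, $\lim_{t\to\infty}w(t)=0$, where $g\in L^1([0,1])$ and $\lim_{t\to\infty}e^{(N-3)t}\int_0^{e^{-t}}g(s)\,ds=0$; (Nav) $w\in C^2([0,\infty))$ solves $(\ast)$ for $t\ge0$ with $w'(0)-(N-1)w(0)=0$, $\lim_{t\to\infty}w(t)=0$, with $g$ as in (D); (E) $w\in C^2(\mathbb{R})$ solves $(\ast)$ for $t\in\mathbb{R}$ with $\lim_{t\to\pm\infty}w(t)=0$, where $g\in L^1([0,\infty))$ and $\lim_{t\to\pm\infty}e^{(N-3)t}\int_0^{e^{-t}}g(s)\,ds=0$. Assume in each case that $g\ge0$ a.e. and $\operatorname{ess\,sup}g>0$. Then, for each of the problems (D), (Nav), (E), there exists $\lambda_0>0$ such that for every $\lambda>\lambda_0$ the problem has no solution.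
   Context: These are the radial Dirichlet, Navier and entire problems for $\Delta^2u=S_2[u]+\lambda f$ ($S_2$ the sum of $2\times2$ principal minors of the Hessian), obtained via $v=u'$, $w(t)=-v(e^{-t})$. *)

theory Defs
  imports "HOL-Analysis.Analysis" "HOL-Probability.Essential_Supremum"
begin

definition forcing :: "nat \<Rightarrow> (real \<Rightarrow> real) \<Rightarrow> real \<Rightarrow> real" where
  "forcing N g t = exp ((real N - 3) * t) * (LBINT s:{0..exp (- t)}. g s)"

definition C2_with :: "real set \<Rightarrow> (real \<Rightarrow> real) \<Rightarrow> (real \<Rightarrow> real) \<Rightarrow> (real \<Rightarrow> real) \<Rightarrow> bool" where
  "C2_with S w w1 w2 \<longleftrightarrow>
     (\<forall>t\<in>S. (w has_real_derivative w1 t) (at t within S)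
           \<and> (w1 has_real_derivative w2 t) (at t within S))
     \<and> continuous_on S w2"

definition ode_at :: "nat \<Rightarrow> real \<Rightarrow> (real \<Rightarrow> real) \<Rightarrow> (real \<Rightarrow> real) \<Rightarrow> (real \<Rightarrow> real) \<Rightarrow> (real \<Rightarrow> real) \<Rightarrow> real \<Rightarrow> bool" where
  "ode_at N lam g w w1 w2 t \<longleftrightarrow>
     - w2 t + (real N - 2) * w1 t + (real N - 1) * w t
       = (real N - 1) / 2 * exp (- t) * (w t)^2 + lam * forcing N g t"

definition dirichlet_sol :: "nat \<Rightarrow> real \<Rightarrow> (real \<Rightarrow> real) \<Rightarrow> (real \<Rightarrow> real) \<Rightarrow> bool" where
  "dirichlet_sol N lam g w \<longleftrightarrow> (\<exists>w1 w2. C2_with {0..} w w1 w2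
     \<and> (\<forall>t\<ge>0. ode_at N lam g w w1 w2 t)
     \<and> w 0 = 0 \<and> (w \<longlongrightarrow> 0) at_top)"

definition navier_sol :: "nat \<Rightarrow> real \<Rightarrow> (real \<Rightarrow> real) \<Rightarrow> (real \<Rightarrow> real) \<Rightarrow> bool" where
  "navier_sol N lam g w \<longleftrightarrow> (\<exists>w1 w2. C2_with {0..} w w1 w2
     \<and> (\<forall>t\<ge>0. ode_at N lam g w w1 w2 t)
     \<and> w1 0 - (real N - 1) * w 0 = 0 \<and> (w \<longlongrightarrow> 0) at_top)"

definition entire_sol :: "nat \<Rightarrow> real \<Rightarrow> (real \<Rightarrow> real) \<Rightarrow> (real \<Rightarrow> real) \<Rightarrow> bool" where
  "entire_sol N lam g w \<longleftrightarrow> (\<exists>w1 w2. C2_with UNIV w w1 w2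
     \<and> (\<forall>t. ode_at N lam g w w1 w2 t)
     \<and> (w \<longlongrightarrow> 0) at_top \<and> (w \<longlongrightarrow> 0) at_bot)"

definition admissible :: "real set \<Rightarrow> (real \<Rightarrow> real) \<Rightarrow> bool" where
  "admissible A g \<longleftrightarrow> set_integrable lborel A g
     \<and> (AE s in lborel. s \<in> A \<longrightarrow> g s \<ge> 0)
     \<and> esssup (restrict_space lborel A) (\<lambda>s. ereal (g s)) > 0"

end

theory Submission
  imports Defs
begin

lemma deriv_lb:
  fixes f f' :: "real \<Rightarrow> real"
  assumes xy: "x \<le> y"
    and d: "\<forall>t\<in>{x..y}. (f has_real_derivative f' t) (at t within {x..y})"
    and lb: "\<forall>t\<in>{x..y}. f' t \<ge> c"
  shows "f y - f x \<ge> c * (y - x)"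
proof -
  define g where "g t = f t - c * t" for t
  have dg: "(g has_real_derivative (f' t - c)) (at t within {x..y})" if "t \<in> {x..y}" for t
    unfolding g_def using d that by (auto intro!: derivative_eq_intros)
  have "g x \<le> g y"
  proof (rule DERIV_nonneg_imp_increasing_open[OF xy])
    fix t assume "x < t" "t < y"
    then have "at t within {x..y} = at t" by (intro at_within_Icc_at) auto
    then show "\<exists>z. DERIV g t :> z \<and> z \<ge> 0" using dg[of t] lb \<open>x<t\<close> \<open>t<y\<close>
      by (intro exI[of _ "f' t - c"]) auto
  next
    show "continuous_on {x..y} g"
      using dg by (meson DERIV_continuous atLeastAtMost_iff continuous_on_eq_continuous_within)
  qed
  then show ?thesis unfolding g_def by (simp add: algebra_simps)
qed

lemma dphi1_poly: "((\<lambda>t. 4 * ((t - a) * (b - t))^3 * (a + b - 2 * t)) has_real_derivative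
   12 * ((t - a) * (b - t))^2 * (a + b - 2 * t)^2 - 8 * ((t - a) * (b - t))^3) (at t within S)"
  by (rule derivative_eq_intros refl)+ (simp add: algebra_simps power2_eq_square power3_eq_cube)

lemma gid_poly:
  fixes n E lam F w w1 et e1 :: real
  shows "- (et^4) * ((n - 2) * w1 + (n - 1) * w - (n - 1) / 2 * E * w^2 - lam * F)
     + (12 * et^2 * e1^2 - 8 * et^3) * w + (n - 2) * (4 * et^3 * e1 * w + et^4 * w1)
   = (n - 1) / 2 * E * (et^2 * w)^2 + (12 * e1^2 - 8 * et + 4 * (n - 2) * et * e1 - (n - 1) * et^2) * (et^2 * w) + lam * et^4 * F"
  by (simp add: field_simps power2_eq_square power3_eq_cube power4_eq_xxxx)

lemma sq_lb:
  fixes al q x :: real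
  assumes "al > 0"
  shows "al * x^2 + q * x \<ge> -(q^2 / (4 * al))"
proof -
  have "0 \<le> (2*al*x + q)^2" by simp
  also have "(2*al*x + q)^2 = 4*al*(al * x^2 + q * x) + q^2" by algebra
  finally have "0 - q^2 \<le> 4*al*(al * x^2 + q * x)" by linarith
  then show ?thesis using assms by (simp add: field_simps)
qed

lemma core:
  fixes N :: nat and a b m :: real
  assumes N: "N \<ge> 2" and ab: "a < b" and m: "m > 0"
  shows "\<exists>L0>0. \<forall>lam>L0. \<forall>w w1 w2 F. \<not> (\<forall>t\<in>{a..b}.
     (w has_real_derivative w1 t) (at t within {a..b}) \<and>
     (w1 has_real_derivative w2 t) (at t within {a..b}) \<and> F t \<ge> m \<and>
     - w2 t + (real N - 2) * w1 t + (real N - 1) * w t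
       = (real N - 1) / 2 * exp (- t) * (w t)^2 + lam * F t)"
proof -
  define c where "c = (real N - 1) / 2"
  have c: "c > 0" using N by (simp add: c_def)
  define eta where "eta t = (t - a) * (b - t)" for t
  define e1 where "e1 t = a + b - 2 * t" for t
  define Q where "Q t = 12 * (e1 t)^2 - 8 * eta t + 4 * (real N - 2) * eta t * e1 t
      - (real N - 1) * (eta t)^2" for t
  define Kf where "Kf t = exp t * (Q t)^2 * (1 / (4 * c))" for t
  have "continuous_on {a..b} Kf"
    unfolding Kf_def Q_def e1_def eta_def
    by (intro continuous_on_mult continuous_on_power continuous_on_add continuous_on_diff continuous_on_exp continuous_on_id continuous_on_const)
  then have "compact (Kf ` {a..b})" by (intro compact_continuous_image) auto
  then obtain s where "s \<in> Kf ` {a..b}" "\<forall>y\<in>Kf ` {a..b}. y \<le> s"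
    using compact_attains_sup[of "Kf ` {a..b}"] ab by auto
  then obtain K where K: "\<forall>t\<in>{a..b}. Kf t \<le> K" and K0: "K \<ge> 0"
    by (intro that[of "max s 0"]) auto
  define D where "D = b - a"
  have D: "D > 0" using ab by (simp add: D_def)
  define a' where "a' = a + D / 4"
  define b' where "b' = b - D / 4"
  define p where "p = (D / 4) ^ 8"
  have p: "p > 0" using D by (simp add: p_def)
  define L0 where "L0 = 2 * K / (m * p) + 1"
  have "2 * K / (m * p) \<ge> 0" using K0 m p by simp
  then have L0: "L0 > 0" by (simp add: L0_def)
  show ?thesis
  proof (intro exI[of _ L0] conjI allI impI notI L0)
    fix lam w w1 w2 F
    assume lam: "lam > L0"
    assume H: "\<forall>t\<in>{a..b}.
     (w has_real_derivative w1 t) (at t within {a..b}) \<and>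
     (w1 has_real_derivative w2 t) (at t within {a..b}) \<and> F t \<ge> m \<and>
     - w2 t + (real N - 2) * w1 t + (real N - 1) * w t
       = (real N - 1) / 2 * exp (- t) * (w t)^2 + lam * F t"
    define phi where "phi t = (eta t)^4" for t
    define phi1 where "phi1 t = 4 * (eta t)^3 * e1 t" for t
    define phi2 where "phi2 t = 12 * (eta t)^2 * (e1 t)^2 - 8 * (eta t)^3" for t
    define Hf where "Hf t = - phi t * w1 t + phi1 t * w t + (real N - 2) * phi t * w t" for t
    define G where "G t = - phi t * w2 t + phi2 t * w t
        + (real N - 2) * (phi1 t * w t + phi t * w1 t)" for t
    have dphi: "(phi has_real_derivative phi1 t) (at t within S)" for t S
      unfolding phi_def phi1_def eta_def e1_def
      by (rule derivative_eq_intros refl)+ (simp add: algebra_simps)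
    have dphi1: "(phi1 has_real_derivative phi2 t) (at t within S)" for t S
      unfolding phi2_def phi1_def eta_def e1_def
      by (rule dphi1_poly)
    have dH: "(Hf has_real_derivative G t) (at t within {a..b})" if "t \<in> {a..b}" for t
    proof -
      have hw: "(w has_real_derivative w1 t) (at t within {a..b})"
        and hw1: "(w1 has_real_derivative w2 t) (at t within {a..b})" using H that by auto
      have d1: "((\<lambda>t. phi t * w1 t) has_real_derivative phi1 t * w1 t + w2 t * phi t) (at t within {a..b})"
        by (rule DERIV_mult[OF dphi hw1])
      have d2: "((\<lambda>t. phi1 t * w t) has_real_derivative phi2 t * w t + w1 t * phi1 t) (at t within {a..b})"
        by (rule DERIV_mult[OF dphi1 hw])
      have d3: "((\<lambda>t. phi t * w t) has_real_derivative phi1 t * w t + w1 t * phi t) (at t within {a..b})"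
        by (rule DERIV_mult[OF dphi hw])
      have "((\<lambda>t. - (phi t * w1 t) + phi1 t * w t + (real N - 2) * (phi t * w t)) has_real_derivative
         - (phi1 t * w1 t + w2 t * phi t) + (phi2 t * w t + w1 t * phi1 t)
           + (real N - 2) * (phi1 t * w t + w1 t * phi t)) (at t within {a..b})"
        by (intro DERIV_add DERIV_minus DERIV_cmult d1 d2 d3)
      then show ?thesis unfolding Hf_def G_def by (simp add: algebra_simps)
    qed
    have Gid: "G t = c * exp (- t) * ((eta t)^2 * w t)^2 + Q t * ((eta t)^2 * w t)
        + lam * phi t * F t" if "t \<in> {a..b}" for t
    proof -
      have ode: "- w2 t + (real N - 2) * w1 t + (real N - 1) * w t
       = (real N - 1) / 2 * exp (- t) * (w t)^2 + lam * F t" using H that by auto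
      have w2eq: "w2 t = (real N - 2) * w1 t + (real N - 1) * w t - c * exp (- t) * (w t)^2 - lam * F t"
        using ode unfolding c_def by linarith
      show ?thesis unfolding G_def w2eq phi_def phi1_def phi2_def Q_def c_def by (rule gid_poly)
    qed
    have Glb: "G t \<ge> lam * phi t * F t - K" if "t \<in> {a..b}" for t
    proof -
      have "c * exp (- t) * ((eta t)^2 * w t)^2 + Q t * ((eta t)^2 * w t) \<ge> -((Q t)^2 / (4 * (c * exp (- t))))"
        using c by (intro sq_lb) auto
      also have "(Q t)^2 / (4 * (c * exp (- t))) = Kf t"
        unfolding Kf_def by (simp add: exp_minus field_simps)
      finally show ?thesis using Gid[OF that] K that by force
    qed
    have phi0: "phi t \<ge> 0" if "t \<in> {a..b}" for t
      using that unfolding phi_def eta_def by simp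
    have Glb0: "G t \<ge> - K" if "t \<in> {a..b}" for t
    proof -
      have "m \<le> F t" using H that by blast
      then have "F t \<ge> 0" using m by linarith
      then have "lam * phi t * F t \<ge> 0" using phi0[OF that] lam L0 by simp
      then show ?thesis using Glb[OF that] by linarith
    qed
    have Glb1: "G t \<ge> lam * p * m - K" if "t \<in> {a'..b'}" for t
    proof -
      have t: "t \<in> {a..b}" using that D by (auto simp: a'_def b'_def)
      have t1: "D/4 \<le> t - a" "D/4 \<le> b - t" using that by (auto simp: a'_def b'_def)
      have "(D/4) * (D/4) \<le> (t - a) * (b - t)"
        using t1 D by (intro mult_mono) auto
      then have "((D/4)^2)^4 \<le> (eta t)^4" unfolding eta_def
        using D by (intro power_mono) (auto simp: power2_eq_square)
      then have pp: "p \<le> phi t" by (simp add: p_def phi_def power_mult[symmetric])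
      have "m \<le> F t" using H t by auto
      then have "p * m \<le> phi t * F t" using pp p m by (intro mult_mono) auto
      then have "lam * (p * m) \<le> lam * (phi t * F t)" using lam L0 by (intro mult_left_mono) auto
      then show ?thesis using Glb[OF t] by (simp add: algebra_simps)
    qed
    have sub: "{x..y} \<subseteq> {a..b}" if "a \<le> x" "y \<le> b" for x y using that by auto
    have ord: "a \<le> a'" "a' \<le> b'" "b' \<le> b" using D unfolding a'_def b'_def D_def by (simp_all add: field_simps)
    have dsub: "\<forall>t\<in>{x..y}. (Hf has_real_derivative G t) (at t within {x..y})"
      if "a \<le> x" "y \<le> b" for x y
    proof
      fix t assume t: "t \<in> {x..y}"
      then have "t \<in> {a..b}" using that by auto
      from has_field_derivative_subset[OF dH[OF this] sub[OF that]]
      show "(Hf has_real_derivative G t) (at t within {x..y})" .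
    qed
    have i1: "Hf a' - Hf a \<ge> (- K) * (a' - a)"
      by (rule deriv_lb[where f'=G]) (use ord dsub[of a a'] Glb0 in auto)
    have i2: "Hf b' - Hf a' \<ge> (lam * p * m - K) * (b' - a')"
      by (rule deriv_lb[where f'=G]) (use ord dsub[of a' b'] Glb1 in auto)
    have i3: "Hf b - Hf b' \<ge> (- K) * (b - b')"
      by (rule deriv_lb[where f'=G]) (use ord dsub[of b' b] Glb0 in auto)
    have Hab: "Hf a = 0" "Hf b = 0" unfolding Hf_def phi_def phi1_def eta_def by simp_all
    have e: "a' - a = D/4" "b' - a' = D/2" "b - b' = D/4" unfolding a'_def b'_def D_def by (simp_all add: field_simps)
    have "(-K)*(D/4) + (lam*p*m - K)*(D/2) + (-K)*(D/4) \<le> 0"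
      using i1 i2 i3 unfolding e Hab by linarith
    also have "(-K)*(D/4) + (lam*p*m - K)*(D/2) + (-K)*(D/4) = (lam*p*m - 2*K)*(D/2)" by algebra
    finally have "lam*p*m - 2*K \<le> 0" using D by (simp add: mult_le_0_iff)
    then have f1: "lam * (m * p) \<le> 2 * K" by (simp add: algebra_simps)
    have f2: "lam * (m * p) > (2 * K / (m * p) + 1) * (m * p)"
      using lam m p unfolding L0_def by (intro mult_strict_right_mono) auto
    have f3: "(2 * K / (m * p) + 1) * (m * p) = 2 * K + m * p" using m p by (simp add: field_simps)
    have "m * p > 0" using m p by simp
    then show False using f1 f2 f3 by linarith
  qed
qed

lemma I_mono:
  fixes g :: "real \<Rightarrow> real"
  assumes int: "set_integrable lborel A g" and nn: "AE s in lborel. s \<in> A \<longrightarrow> 0 \<le> g s"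
    and sub: "{0..y} \<subseteq> A" and xy: "x \<le> y"
  shows "(LBINT s:{0..x}. g s) \<le> (LBINT s:{0..y}. g s)"
proof -
  have "{0..x} \<subseteq> A" using sub xy by auto
  then have i1: "set_integrable lborel {0..x} g" using set_integrable_subset[OF int] by auto
  have i2: "set_integrable lborel {0..y} g" using set_integrable_subset[OF int _ sub] by auto
  show ?thesis
    unfolding set_lebesgue_integral_def
  proof (rule integral_mono_AE)
    show "integrable lborel (\<lambda>s. indicator {0..x} s *\<^sub>R g s)" using i1 by (simp add: set_integrable_def)
    show "integrable lborel (\<lambda>s. indicator {0..y} s *\<^sub>R g s)" using i2 by (simp add: set_integrable_def)
    show "AE s in lborel. indicator {0..x} s *\<^sub>R g s \<le> indicator {0..y} s *\<^sub>R g s"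
      using nn
    proof eventually_elim
      case (elim s)
      then show ?case using sub xy by (auto split: split_indicator)
    qed
  qed
qed

lemma exists_pos:
  fixes g :: "real \<Rightarrow> real" and x :: "nat \<Rightarrow> real"
  assumes int: "set_integrable lborel A g" and nn: "AE s in lborel. s \<in> A \<longrightarrow> 0 \<le> g s"
    and es: "esssup (restrict_space lborel A) (\<lambda>s. ereal (g s)) > 0"
    and A: "A \<in> sets lborel"
    and sub: "\<And>n. {0..x n} \<subseteq> A"
    and cov: "AE s in lborel. s \<in> A \<longrightarrow> (\<exists>n. s \<in> {0..x n})"
  shows "\<exists>n. (LBINT s:{0..x n}. g s) > 0"
proof (rule ccontr)
  assume "\<not> ?thesis"
  then have np: "(LBINT s:{0..x n}. g s) \<le> 0" for n by (meson not_less)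
  have z: "AE s in lborel. s \<in> {0..x n} \<longrightarrow> g s = 0" for n
  proof -
    have i: "integrable lborel (\<lambda>s. indicator {0..x n} s *\<^sub>R g s)"
      using set_integrable_subset[OF int _ sub] by (simp add: set_integrable_def)
    have nn': "AE s in lborel. 0 \<le> indicator {0..x n} s *\<^sub>R g s"
      using nn
    proof eventually_elim
      case (elim s)
      then show ?case using sub[of n] by (auto split: split_indicator)
    qed
    have "integral\<^sup>L lborel (\<lambda>s. indicator {0..x n} s *\<^sub>R g s) \<ge> 0"
      by (rule integral_nonneg_AE[OF nn'])
    then have "integral\<^sup>L lborel (\<lambda>s. indicator {0..x n} s *\<^sub>R g s) = 0"
      using np[of n] unfolding set_lebesgue_integral_def by linarith
    then have "AE s in lborel. indicator {0..x n} s *\<^sub>R g s = 0"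
      using integral_nonneg_eq_0_iff_AE[OF i nn'] by simp
    then show ?thesis
    proof eventually_elim
      case (elim s)
      then show ?case by (auto split: split_indicator)
    qed
  qed
  then have "AE s in lborel. \<forall>n. s \<in> {0..x n} \<longrightarrow> g s = 0"
    using z by (subst AE_all_countable) blast
  then have "AE s in lborel. s \<in> A \<longrightarrow> g s \<le> 0"
    using cov
  proof eventually_elim
    case (elim s)
    then show ?case by fastforce
  qed
  then have ae: "AE s in restrict_space lborel A. ereal (g s) \<le> 0"
    using A by (subst AE_restrict_space_iff) auto
  have "(\<lambda>s. indicator A s *\<^sub>R g s) \<in> borel_measurable lborel"
    using int by (simp add: set_integrable_def)
  then have "g \<in> borel_measurable (restrict_space lborel A)"
    using A by (subst borel_measurable_restrict_space_iff) auto
  then have "(\<lambda>s. ereal (g s)) \<in> borel_measurable (restrict_space lborel A)"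
    by measurable
  then have "esssup (restrict_space lborel A) (\<lambda>s. ereal (g s)) \<le> 0"
    using ae by (intro esssup_I)
  then show False using es by simp
qed


lemma forcing_lb:
  fixes g :: "real \<Rightarrow> real"
  assumes int: "set_integrable lborel A g" and nn: "AE s in lborel. s \<in> A \<longrightarrow> 0 \<le> g s"
    and sub: "{0..exp (- a)} \<subseteq> A" and t: "t \<in> {a..b}"
    and I0: "(LBINT s:{0..exp (- b)}. g s) \<ge> 0"
  shows "forcing N g t \<ge> exp (- \<bar>real N - 3\<bar> * (\<bar>a\<bar> + \<bar>b\<bar>)) * (LBINT s:{0..exp (- b)}. g s)"
proof -
  have "{0..exp (- t)} \<subseteq> {0..exp (- a)}" using t by auto
  then have "(LBINT s:{0..exp (- b)}. g s) \<le> (LBINT s:{0..exp (- t)}. g s)"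
    using t sub by (intro I_mono[OF int nn]) (blast, auto)
  moreover have "exp (- \<bar>real N - 3\<bar> * (\<bar>a\<bar> + \<bar>b\<bar>)) \<le> exp ((real N - 3) * t)"
  proof -
    have "\<bar>t\<bar> \<le> \<bar>a\<bar> + \<bar>b\<bar>" using t by auto
    then have "\<bar>real N - 3\<bar> * \<bar>t\<bar> \<le> \<bar>real N - 3\<bar> * (\<bar>a\<bar> + \<bar>b\<bar>)"
      by (intro mult_left_mono) auto
    moreover have "- (\<bar>real N - 3\<bar> * \<bar>t\<bar>) \<le> (real N - 3) * t"
      by (metis abs_ge_minus_self abs_mult minus_le_iff)
    ultimately show ?thesis by simp
  qed
  ultimately show ?thesis unfolding forcing_def
    using I0 by (intro mult_mono) auto
qed

lemma main_case:
  fixes g :: "real \<Rightarrow> real" and N :: nat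
  assumes N: "N \<ge> 2" and int: "set_integrable lborel A g" and nn: "AE s in lborel. s \<in> A \<longrightarrow> 0 \<le> g s"
    and ab: "a < b" and sub: "{0..exp (- a)} \<subseteq> A"
    and I0: "(LBINT s:{0..exp (- b)}. g s) > 0"
    and S: "{a..b} \<subseteq> S"
  shows "\<exists>lam0>0. \<forall>lam>lam0. \<not> (\<exists>w w1 w2. C2_with S w w1 w2 \<and> (\<forall>t\<in>{a..b}. ode_at N lam g w w1 w2 t))"
proof -
  define m where "m = exp (- \<bar>real N - 3\<bar> * (\<bar>a\<bar> + \<bar>b\<bar>)) * (LBINT s:{0..exp (- b)}. g s)"
  have m: "m > 0" using I0 by (simp add: m_def)
  obtain L0 where L0: "L0 > 0" and nc: "\<forall>lam>L0. \<forall>w w1 w2 F. \<not> (\<forall>t\<in>{a..b}.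
     (w has_real_derivative w1 t) (at t within {a..b}) \<and>
     (w1 has_real_derivative w2 t) (at t within {a..b}) \<and> F t \<ge> m \<and>
     - w2 t + (real N - 2) * w1 t + (real N - 1) * w t
       = (real N - 1) / 2 * exp (- t) * (w t)^2 + lam * F t)"
    using core[OF N ab m] by blast
  show ?thesis
  proof (intro exI[of _ L0] conjI allI impI notI L0)
    fix lam assume lam: "lam > L0"
    assume "\<exists>w w1 w2. C2_with S w w1 w2 \<and> (\<forall>t\<in>{a..b}. ode_at N lam g w w1 w2 t)"
    then obtain w w1 w2 where C: "C2_with S w w1 w2" and O: "\<forall>t\<in>{a..b}. ode_at N lam g w w1 w2 t"
      by blast
    have "\<forall>t\<in>{a..b}.
     (w has_real_derivative w1 t) (at t within {a..b}) \<and>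
     (w1 has_real_derivative w2 t) (at t within {a..b}) \<and> forcing N g t \<ge> m \<and>
     - w2 t + (real N - 2) * w1 t + (real N - 1) * w t
       = (real N - 1) / 2 * exp (- t) * (w t)^2 + lam * forcing N g t"
    proof
      fix t assume t: "t \<in> {a..b}"
      then have tS: "t \<in> S" using S by auto
      have d1: "(w has_real_derivative w1 t) (at t within S)" and d2: "(w1 has_real_derivative w2 t) (at t within S)"
        using C tS unfolding C2_with_def by auto
      have "forcing N g t \<ge> m" unfolding m_def
        using forcing_lb[OF int nn sub t] I0 by auto
      then show "(w has_real_derivative w1 t) (at t within {a..b}) \<and>
     (w1 has_real_derivative w2 t) (at t within {a..b}) \<and> forcing N g t \<ge> m \<and>
     - w2 t + (real N - 2) * w1 t + (real N - 1) * w t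
       = (real N - 1) / 2 * exp (- t) * (w t)^2 + lam * forcing N g t"
        using has_field_derivative_subset[OF d1 S] has_field_derivative_subset[OF d2 S] O t
        unfolding ode_at_def by auto
    qed
    then show False using nc lam by blast
  qed
qed

lemma case01:
  fixes g :: "real \<Rightarrow> real" and N :: nat
  assumes N: "N \<ge> 2" and adm: "admissible {0..1} g"
  shows "\<exists>a b. 0 < a \<and> a < b \<and> {0..exp (- a)} \<subseteq> {0..1} \<and> (LBINT s:{0..exp (- b)}. g s) > 0"
proof -
  define x where "x n = 1 - 1 / (real n + 2)" for n :: nat
  have x: "0 < x n" "x n < 1" for n unfolding x_def by (auto simp: field_simps)
  have cov: "AE s in lborel. s \<in> {0..1} \<longrightarrow> (\<exists>n. s \<in> {0..x n})"
    using AE_lborel_singleton[of "1::real"]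
  proof eventually_elim
    case (elim s)
    show ?case
    proof
      assume s: "s \<in> {0..1::real}"
      then have "0 < 1 - s" using elim by auto
      then obtain n where n: "n > 0" "inverse (real n) < 1 - s" using ex_inverse_of_nat_less by blast
      have "1 / (real n + 2) \<le> inverse (real n)" using n by (simp add: field_simps)
      then have "s \<le> x n" using n unfolding x_def by linarith
      then show "\<exists>n. s \<in> {0..x n}" using s by auto
    qed
  qed
  obtain n where n: "(LBINT s:{0..x n}. g s) > 0"
    using exists_pos[of "{0..1}" g x] adm cov x unfolding admissible_def
    by (metis atLeastAtMost_iff atLeastatMost_subset_iff less_imp_le order_refl sets_lborel atLeastAtMost_borel)
  define b where "b = - ln (x n)"
  have b: "b > 0" "exp (- b) = x n" using x[of n] by (auto simp: b_def)
  show ?thesis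
    using b n by (intro exI[of _ "b/2"] exI[of _ b]) auto
qed

lemma case0inf:
  fixes g :: "real \<Rightarrow> real" and N :: nat
  assumes N: "N \<ge> 2" and adm: "admissible {0..} g"
  shows "\<exists>a b. a < b \<and> (LBINT s:{0..exp (- b)}. g s) > 0"
proof -
  define x where "x n = real n + 1" for n :: nat
  have x: "0 < x n" for n unfolding x_def by auto
  have cov: "AE s in lborel. s \<in> {0..} \<longrightarrow> (\<exists>n. s \<in> {0..x n})"
  proof (rule AE_I2, rule impI)
    fix s :: real assume "s \<in> {0..}"
    moreover obtain n where "s \<le> real n" using real_arch_simple by blast
    ultimately show "\<exists>n. s \<in> {0..x n}" unfolding x_def by (intro exI[of _ n]) auto
  qed
  obtain n where n: "(LBINT s:{0..x n}. g s) > 0"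
    using exists_pos[of "{0..}" g x] adm cov x unfolding admissible_def by auto
  define b where "b = - ln (x n)"
  have b: "exp (- b) = x n" using x[of n] by (auto simp: b_def)
  show ?thesis
    using b n by (intro exI[of _ "b - 1"] exI[of _ b]) auto
qed

theorem theorem4p14:
  fixes N :: nat
  assumes "N \<ge> 2"
  shows
   "(\<forall>g. admissible {0..1} g \<and> ((\<lambda>t. forcing N g t) \<longlongrightarrow> 0) at_top \<longrightarrow>
       (\<exists>lam0>0. \<forall>lam>lam0. \<not> (\<exists>w. dirichlet_sol N lam g w)))
  \<and> (\<forall>g. admissible {0..1} g \<and> ((\<lambda>t. forcing N g t) \<longlongrightarrow> 0) at_top \<longrightarrow>
       (\<exists>lam0>0. \<forall>lam>lam0. \<not> (\<exists>w. navier_sol N lam g w)))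
  \<and> (\<forall>g. admissible {0..} g \<and> ((\<lambda>t. forcing N g t) \<longlongrightarrow> 0) at_top
          \<and> ((\<lambda>t. forcing N g t) \<longlongrightarrow> 0) at_bot \<longrightarrow>
       (\<exists>lam0>0. \<forall>lam>lam0. \<not> (\<exists>w. entire_sol N lam g w)))"
proof (intro conjI allI impI)
  fix g assume h: "admissible {0..1} g \<and> ((\<lambda>t. forcing N g t) \<longlongrightarrow> 0) at_top"
  then obtain a b where ab: "0 < a" "a < b" "{0..exp (- a)} \<subseteq> {0..1}" "(LBINT s:{0..exp (- b)}. g s) > 0"
    using case01[OF assms] by blast
  have int: "set_integrable lborel {0..1} g" and nn: "AE s in lborel. s \<in> {0..1} \<longrightarrow> 0 \<le> g s"
    using h unfolding admissible_def by auto
  have S: "{a..b} \<subseteq> {0..}" using ab by auto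
  obtain lam0 where l: "lam0 > 0" "\<forall>lam>lam0. \<not> (\<exists>w w1 w2. C2_with {0..} w w1 w2 \<and> (\<forall>t\<in>{a..b}. ode_at N lam g w w1 w2 t))"
    using main_case[OF assms int nn ab(2) ab(3) ab(4) S] by blast
  show "\<exists>lam0>0. \<forall>lam>lam0. \<not> (\<exists>w. dirichlet_sol N lam g w)"
    using l S unfolding dirichlet_sol_def by (intro exI[of _ lam0]) fastforce
  show "\<exists>lam0>0. \<forall>lam>lam0. \<not> (\<exists>w. navier_sol N lam g w)"
    using l S unfolding navier_sol_def by (intro exI[of _ lam0]) fastforce
next
  fix g assume h: "admissible {0..} g \<and> ((\<lambda>t. forcing N g t) \<longlongrightarrow> 0) at_top
          \<and> ((\<lambda>t. forcing N g t) \<longlongrightarrow> 0) at_bot"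
  then obtain a b where ab: "a < b" "(LBINT s:{0..exp (- b)}. g s) > 0"
    using case0inf[OF assms] by blast
  have int: "set_integrable lborel {0..} g" and nn: "AE s in lborel. s \<in> {0..} \<longrightarrow> 0 \<le> g s"
    using h unfolding admissible_def by auto
  obtain lam0 where l: "lam0 > 0" "\<forall>lam>lam0. \<not> (\<exists>w w1 w2. C2_with UNIV w w1 w2 \<and> (\<forall>t\<in>{a..b}. ode_at N lam g w w1 w2 t))"
    using main_case[OF assms int nn ab(1) _ ab(2), of UNIV] by auto
  show "\<exists>lam0>0. \<forall>lam>lam0. \<not> (\<exists>w. entire_sol N lam g w)"
    using l unfolding entire_sol_def by (intro exI[of _ lam0]) fastforce
qed

end
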